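(* Every modification of $D$ performed by any stage of the Purification procedure replaces $D$ by a cirquent of strictly smaller rank.
   Context: Cirquents: $\top$, $\bot$ and literals ($p$ or $\neg p$, $p$ an elementary letter) are cirquents; if $A,B$ are cirquents then so are $A\vee B$, $A\wedge B$, $A\sqcap^cB$ ($c$ a conjunctive cluster) and $A\sqcup^cB$ ($c$ a disjunctive cluster); clusters are drawn from two disjoint infinite sets. A surface occurrence of a subcirquent or connective is one not in the scope of any choice connective $\sqcup^c,\sqcap^c$. Tetration: ${}^1a=a$, ${}^{n+1}a=a^{({}^na)}$. Rank: $\overline{C}=1$ for $\top,\bot$ and literals; $\overline{A\sqcup^cB}=\overline{A\sqcap^cB}=\overline{A}+\overline{B}$; $\overline{A\wedge B}=5^{\overline{A}+\overline{B}}$; $\overline{A\vee B}={}^{(\overline{A}+\overline{B})}5$. Purification procedure applied to a cirquent $D$: Stages 1 through 7 are executed in order; each stage is a loop iterated until it no longer modifies the current $D$, after which the next stage begins (after Stage 7 the current $D$ is returned). Stage 1: if $D$ has a surface occurrence of $\bot\vee A$ or $A\vee\bot$, change it to $A$; next, if $D$ has a surface occurrence of $\bot\wedge A$ or $A\wedge\bot$, change it to $\bot$. Stage 2: a surface occurrence of $(A\wedge B)\vee C$ or $C\vee(A\wedge B)$ is changed to $(A\vee C)\wedge(B\vee C)$. Stage 3: a surface occurrence of $(A\sqcap^cB)\vee C$ or $C\vee(A\sqcap^cB)$ is changed to $(A\vee C)\sqcap^c(B\vee C)$. Stage 4: a surface occurrence of $A_1\vee\dots\vee A_n$ (any bracketing)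 such that for some letter $p$ both $p$ and $\neg p$ are among $A_1,\dots,A_n$ is changed to $\top$. Stage 5: a surface occurrence of $\top\vee A$ or $A\vee\top$ is changed to $\top$; next, a surface occurrence of $\top\wedge A$ or $A\wedge\top$ is changed to $A$. Stage 6: a surface occurrence of $(A\sqcap^aB)\wedge(E\sqcap^bF)$ is changed to $\big((A\wedge(E\sqcap^bF))\sqcap^a(B\wedge(E\sqcap^bF))\big)\sqcap^c\big(((A\sqcap^aB)\wedge E)\sqcap^b((A\sqcap^aB)\wedge F)\big)$, where $c$ is a conjunctive cluster not occurring in $D$. Stage 7: if $D$ is of the form $X[E\sqcap^cF]\sqcap^cA$ (resp. $A\sqcap^cX[E\sqcap^cF]$), change it to $X[E]\sqcap^cA$ (resp. $A\sqcap^cX[F]$), where $X[E\sqcap^cF]$ denotes a cirquent containing the subcirquent $E\sqcap^cF$ and $X[E]$ the result of replacing it by $E$. *)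

theory Defs
  imports Main
begin

text \<open>Conjunctive and
disjunctive clusters are drawn from two disjoint infinite sets; we model them as
natural numbers attached to distinct constructors (CAnd for choice-conjunction with
a conjunctive cluster, COr for choice-disjunction with a disjunctive cluster).
Lit True p is the literal p, Lit False p is the literal neg p.\<close>

datatype 'l cirq =
    Top
  | Bot
  | Lit bool 'l
  | Or "'l cirq" "'l cirq"
  | And "'l cirq" "'l cirq"
  | CAnd nat "'l cirq" "'l cirq"
  | COr nat "'l cirq" "'l cirq"

text \<open>Tetration: tet a 1 = a, tet a (n+1) = a ^ (tet a n). (Value at 0 is irrelevant.)\<close>
fun tet :: "nat \<Rightarrow> nat \<Rightarrow> nat" where
  "tet a 0 = 1"
| "tet a (Suc 0) = a"
| "tet a (Suc (Suc n)) = a ^ (tet a (Suc n))"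

fun rank :: "'l cirq \<Rightarrow> nat" where
  "rank Top = 1"
| "rank Bot = 1"
| "rank (Lit b p) = 1"
| "rank (CAnd c A B) = rank A + rank B"
| "rank (COr c A B) = rank A + rank B"
| "rank (And A B) = 5 ^ (rank A + rank B)"
| "rank (Or A B) = tet 5 (rank A + rank B)"

fun conj_clusters :: "'l cirq \<Rightarrow> nat set" where
  "conj_clusters (CAnd c A B) = insert c (conj_clusters A \<union> conj_clusters B)"
| "conj_clusters (COr c A B) = conj_clusters A \<union> conj_clusters B"
| "conj_clusters (And A B) = conj_clusters A \<union> conj_clusters B"
| "conj_clusters (Or A B) = conj_clusters A \<union> conj_clusters B"
| "conj_clusters _ = {}"

text \<open>surf_repl D X Y D': D' results from D by replacing one surface occurrence
(not in the scope of any choice connective) of X by Y.\<close>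
inductive surf_repl :: "'l cirq \<Rightarrow> 'l cirq \<Rightarrow> 'l cirq \<Rightarrow> 'l cirq \<Rightarrow> bool" where
  here: "surf_repl X X Y Y"
| orL: "surf_repl A X Y A' \<Longrightarrow> surf_repl (Or A B) X Y (Or A' B)"
| orR: "surf_repl B X Y B' \<Longrightarrow> surf_repl (Or A B) X Y (Or A B')"
| andL: "surf_repl A X Y A' \<Longrightarrow> surf_repl (And A B) X Y (And A' B)"
| andR: "surf_repl B X Y B' \<Longrightarrow> surf_repl (And A B) X Y (And A B')"

inductive any_repl :: "'l cirq \<Rightarrow> 'l cirq \<Rightarrow> 'l cirq \<Rightarrow> 'l cirq \<Rightarrow> bool" where
  here: "any_repl X X Y Y"
| orL: "any_repl A X Y A' \<Longrightarrow> any_repl (Or A B) X Y (Or A' B)"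
| orR: "any_repl B X Y B' \<Longrightarrow> any_repl (Or A B) X Y (Or A B')"
| andL: "any_repl A X Y A' \<Longrightarrow> any_repl (And A B) X Y (And A' B)"
| andR: "any_repl B X Y B' \<Longrightarrow> any_repl (And A B) X Y (And A B')"
| candL: "any_repl A X Y A' \<Longrightarrow> any_repl (CAnd c A B) X Y (CAnd c A' B)"
| candR: "any_repl B X Y B' \<Longrightarrow> any_repl (CAnd c A B) X Y (CAnd c A B')"
| corL: "any_repl A X Y A' \<Longrightarrow> any_repl (COr c A B) X Y (COr c A' B)"
| corR: "any_repl B X Y B' \<Longrightarrow> any_repl (COr c A B) X Y (COr c A B')"

fun disjuncts :: "'l cirq \<Rightarrow> 'l cirq list" where
  "disjuncts (Or A B) = disjuncts A @ disjuncts B"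
| "disjuncts C = [C]"

inductive stage_rule :: "nat \<Rightarrow> 'l cirq \<Rightarrow> 'l cirq \<Rightarrow> bool" where
  s1_orL: "surf_repl D (Or Bot A) A D' \<Longrightarrow> stage_rule 1 D D'"
| s1_orR: "surf_repl D (Or A Bot) A D' \<Longrightarrow> stage_rule 1 D D'"
| s1_andL: "surf_repl D (And Bot A) Bot D' \<Longrightarrow> stage_rule 1 D D'"
| s1_andR: "surf_repl D (And A Bot) Bot D' \<Longrightarrow> stage_rule 1 D D'"
| s2_L: "surf_repl D (Or (And A B) C) (And (Or A C) (Or B C)) D' \<Longrightarrow> stage_rule 2 D D'"
| s2_R: "surf_repl D (Or C (And A B)) (And (Or A C) (Or B C)) D' \<Longrightarrow> stage_rule 2 D D'"
| s3_L: "surf_repl D (Or (CAnd c A B) C) (CAnd c (Or A C) (Or B C)) D' \<Longrightarrow> stage_rule 3 D D'"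
| s3_R: "surf_repl D (Or C (CAnd c A B)) (CAnd c (Or A C) (Or B C)) D' \<Longrightarrow> stage_rule 3 D D'"
| s4: "\<lbrakk> Lit True p \<in> set (disjuncts (Or A B)); Lit False p \<in> set (disjuncts (Or A B));
        surf_repl D (Or A B) Top D' \<rbrakk> \<Longrightarrow> stage_rule 4 D D'"
| s5_orL: "surf_repl D (Or Top A) Top D' \<Longrightarrow> stage_rule 5 D D'"
| s5_orR: "surf_repl D (Or A Top) Top D' \<Longrightarrow> stage_rule 5 D D'"
| s5_andL: "surf_repl D (And Top A) A D' \<Longrightarrow> stage_rule 5 D D'"
| s5_andR: "surf_repl D (And A Top) A D' \<Longrightarrow> stage_rule 5 D D'"
| s6: "\<lbrakk> c \<notin> conj_clusters D;
        surf_repl D (And (CAnd a A B) (CAnd b E F))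
          (CAnd c (CAnd a (And A (CAnd b E F)) (And B (CAnd b E F)))
                  (CAnd b (And (CAnd a A B) E) (And (CAnd a A B) F))) D' \<rbrakk>
       \<Longrightarrow> stage_rule 6 D D'"
| s7_L: "any_repl X (CAnd c E F) E X' \<Longrightarrow> stage_rule 7 (CAnd c X A) (CAnd c X' A)"
| s7_R: "any_repl X (CAnd c E F) F X' \<Longrightarrow> stage_rule 7 (CAnd c A X) (CAnd c A X')"

end

theory Submission
  imports Defs
begin

lemma lt_pow5: "(x::nat) < 5 ^ x"
  by (induction x) auto

lemma two_lt_pow5: "(x::nat) \<ge> 1 \<Longrightarrow> 2 * x < 5 ^ x"
proof (induction x)
  case 0 then show ?case by simp
next
  case (Suc x) then show ?case by (cases "x = 0") auto
qed

lemma tet_step: "tet 5 n < tet 5 (Suc n)"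
proof (cases n)
  case 0 then show ?thesis by simp
next
  case (Suc m) then show ?thesis using lt_pow5[of "tet 5 (Suc m)"] by simp
qed

lemma tet_smono: "strict_mono (tet 5)"
  using tet_step by (simp add: strict_mono_Suc_iff)

lemma tet_less: "a < b \<Longrightarrow> tet 5 a < tet 5 b"
  using tet_smono by (simp add: strict_mono_less)

lemma tet_le: "a \<le> b \<Longrightarrow> tet 5 a \<le> tet 5 b"
  using tet_smono by (simp add: strict_mono_less_eq)

lemma tet_ge: "n < tet 5 n"
proof (induction n)
  case 0 then show ?case by simp
next
  case (Suc n) then show ?case using tet_step[of n] by simp
qed

lemma tet_double: "m \<ge> 1 \<Longrightarrow> 2 * tet 5 m < tet 5 (Suc m)"
proof -
  assume "m \<ge> 1"
  then obtain k where m: "m = Suc k" by (cases m) auto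
  have "tet 5 m \<ge> 1" using tet_ge[of m] by simp
  then show ?thesis using two_lt_pow5[of "tet 5 m"] m by simp
qed

lemma rank_pos: "rank X \<ge> 1"
  by (induction X) (auto simp: Suc_le_eq intro: le_less_trans[OF _ tet_ge])

lemma surf_mono: "surf_repl D X Y D' \<Longrightarrow> rank Y < rank X \<Longrightarrow> rank D' < rank D"
  by (induction rule: surf_repl.induct) (auto intro: tet_less)

lemma any_mono: "any_repl D X Y D' \<Longrightarrow> rank Y < rank X \<Longrightarrow> rank D' < rank D"
  by (induction rule: any_repl.induct) (auto intro: tet_less)

lemma s2_ineq:
  fixes a b c :: nat
  assumes "a \<ge> 1" "b \<ge> 1" "c \<ge> 1"
  shows "(5::nat) ^ (tet 5 (a + c) + tet 5 (b + c)) < tet 5 (5 ^ (a + b) + c)"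
proof -
  have big: "a + b + 2 < 5 ^ (a + b)"
  proof -
    have "(2::nat) * (a+b) < 5 ^ (a+b)" using two_lt_pow5[of "a+b"] assms by simp
    moreover have "a + b \<ge> 2" using assms by simp
    moreover have "(2::nat)*(a+b) = (a+b)+(a+b)" by simp
    ultimately show ?thesis by linarith
  qed
  define m where "m = max a b + c"
  have m1: "m \<ge> 1" using assms by (simp add: m_def)
  have "tet 5 (a + c) + tet 5 (b + c) \<le> 2 * tet 5 m"
    using tet_le[of "a+c" m] tet_le[of "b+c" m] by (simp add: m_def)
  also have "\<dots> < tet 5 (Suc m)" using tet_double[OF m1] .
  also have "\<dots> \<le> tet 5 (5 ^ (a + b) + c - 1)"
    by (rule tet_le) (use big in \<open>simp add: m_def\<close>)
  finally have lt: "tet 5 (a + c) + tet 5 (b + c) < tet 5 (5 ^ (a + b) + c - 1)" .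
  define k where "k = 5 ^ (a + b) + c - 2"
  have k: "5 ^ (a + b) + c = Suc (Suc k)"
    using big unfolding k_def by linarith
  have eq: "tet 5 (5 ^ (a + b) + c) = 5 ^ tet 5 (5 ^ (a + b) + c - 1)"
    unfolding k by simp
  show ?thesis unfolding eq using lt by (simp add: power_strict_increasing)
qed

lemma s3_ineq:
  fixes a b c :: nat
  assumes "a \<ge> 1" "b \<ge> 1" "c \<ge> 1"
  shows "tet 5 (a + c) + tet 5 (b + c) < tet 5 (a + b + c)"
proof -
  define m where "m = max a b + c"
  have m1: "m \<ge> 1" using assms by (simp add: m_def)
  have "tet 5 (a + c) + tet 5 (b + c) \<le> 2 * tet 5 m"
    using tet_le[of "a+c" m] tet_le[of "b+c" m] by (simp add: m_def)
  also have "\<dots> < tet 5 (Suc m)" using tet_double[OF m1] .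
  also have "\<dots> \<le> tet 5 (a + b + c)" by (rule tet_le) (use assms in \<open>simp add: m_def\<close>)
  finally show ?thesis .
qed

lemma s6_ineq:
  fixes a b e f :: nat
  assumes "a \<ge> 1" "b \<ge> 1" "e \<ge> 1" "f \<ge> 1"
  shows "(5::nat) ^ (a + (e + f)) + 5 ^ (b + (e + f)) + (5 ^ (a + b + e) + 5 ^ (a + b + f))
         < 5 ^ (a + b + (e + f))"
proof -
  define N where "N = a + b + e + f - 1"
  have NN: "a + b + (e + f) = Suc N" using assms by (simp add: N_def)
  have "(5::nat) ^ (a + (e + f)) \<le> 5 ^ N" by (rule power_increasing) (use assms in \<open>auto simp: N_def\<close>)
  moreover have "(5::nat) ^ (b + (e + f)) \<le> 5 ^ N" by (rule power_increasing) (use assms in \<open>auto simp: N_def\<close>)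
  moreover have "(5::nat) ^ (a + b + e) \<le> 5 ^ N" by (rule power_increasing) (use assms in \<open>auto simp: N_def\<close>)
  moreover have "(5::nat) ^ (a + b + f) \<le> 5 ^ N" by (rule power_increasing) (use assms in \<open>auto simp: N_def\<close>)
  moreover have "(0::nat) < 5 ^ N" by simp
  ultimately have "(5::nat) ^ (a + (e + f)) + 5 ^ (b + (e + f)) + (5 ^ (a + b + e) + 5 ^ (a + b + f)) < 5 * 5 ^ N"
    by linarith
  then show ?thesis unfolding NN by simp
qed

lemma h_or1: "x < tet 5 (Suc x)"
  using tet_ge[of "Suc x"] by simp
lemma h_or3: "1 \<le> y \<Longrightarrow> Suc 0 < tet 5 (y + z)"
  using tet_le[of 1 "y+z"] by simp
lemma h_or4: "1 \<le> z \<Longrightarrow> Suc 0 < tet 5 (y + z)"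
  using tet_le[of 1 "y+z"] by simp
lemma h_five: "Suc 0 < 5 * (5::nat) ^ n"
  by (induction n) auto
lemma h_top: "Suc 0 < tet 5 (Suc x)"
  using tet_le[of 1 "Suc x"] by simp
lemma h_and0: "x < 5 * (5::nat) ^ x"
  using lt_pow5[of x] by simp
lemma h_and1: "x < (5::nat) ^ (Suc 0 + x)"
  using lt_pow5[of x] by simp
lemma h_and2: "x < (5::nat) ^ (x + Suc 0)"
  using lt_pow5[of x] by simp

theorem lemma7p4:
  fixes D D' :: "'l cirq" and i :: nat
  assumes "stage_rule i D D'"
  shows "rank D' < rank D"
  using assms
proof (induction rule: stage_rule.induct)
  case (s1_orL D A D') then show ?case by (rule surf_mono) (simp add: h_or1)
next
  case (s1_orR D A D') then show ?case by (rule surf_mono) (simp add: h_or1)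
next
  case (s1_andL D A D') then show ?case by (rule surf_mono) (simp add: h_five)
next
  case (s1_andR D A D') then show ?case by (rule surf_mono) (simp add: h_five)
next
  case (s2_L D A B C D') then show ?case
    by (rule surf_mono) (simp only: rank.simps, rule s2_ineq[OF rank_pos rank_pos rank_pos])
next
  case (s2_R D C A B D') then show ?case
    by (rule surf_mono) (simp only: rank.simps add.commute[of "rank C"], rule s2_ineq[OF rank_pos rank_pos rank_pos])
next
  case (s3_L D c A B C D') then show ?case
    by (rule surf_mono) (simp only: rank.simps, rule s3_ineq[OF rank_pos rank_pos rank_pos])
next
  case (s3_R D C c A B D') then show ?case
    by (rule surf_mono) (simp only: rank.simps add.commute[of "rank C"], rule s3_ineq[OF rank_pos rank_pos rank_pos])
next
  case (s4 p A B D D') from s4(3) show ?case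
    by (rule surf_mono) (simp add: h_or3[OF rank_pos[of A]])
next
  case (s5_orL D A D') then show ?case by (rule surf_mono) (simp add: h_top)
next
  case (s5_orR D A D') then show ?case by (rule surf_mono) (simp add: h_top)
next
  case (s5_andL D A D') then show ?case by (rule surf_mono) (simp add: h_and0)
next
  case (s5_andR D A D') then show ?case by (rule surf_mono) (simp add: h_and0)
next
  case (s6 c D a A B b E F D') from s6(2) show ?case
    by (rule surf_mono) (simp only: rank.simps, rule s6_ineq[OF rank_pos rank_pos rank_pos rank_pos])
next
  case (s7_L X c E F X' A) then show ?case
    using any_mono[OF s7_L] rank_pos[of F] by simp
next
  case (s7_R X c E F X' A) then show ?case
    using any_mono[OF s7_R] rank_pos[of E] by simp
qed

end
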